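(* For any $a,b\in S_Z$, the vertices $a$ and $b$ are not adjacent in $\Gamma$.
   Context: All graphs are finite and simple. A graph $G$ is a minimal prime graph complement if $G$ has at least $2$ vertices and: (1) the complement $\overline{G}$ is connected; (2) $G$ is triangle-free; (3) $G$ is $3$-colorable; (4) for any two distinct nonadjacent vertices $u,v$ of $G$, adding the edge $uv$ to $G$ yields a graph that either contains a triangle or is not $3$-colorable. Standing setup: $\Gamma$ is a minimal prime graph complement with a vertex $X$ of degree $2$, whose two neighbors are $A$ and $B$. Among the vertices of $\Gamma$ other than $X,A,B$: $S_A$ is the set of those adjacent to $A$ but not $B$; $S_B$ the set of those adjacent to $B$ but not $A$; $S_Y$ the set of those adjacent to both $A$ and $B$; $S_Z$ the set of those adjacent to neither $A$ nor $B$. *)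

theory Defs
  imports Main
begin

definition simple_graph :: "'a set \<Rightarrow> ('a \<Rightarrow> 'a \<Rightarrow> bool) \<Rightarrow> bool" where
  "simple_graph V E \<longleftrightarrow> finite V \<and> (\<forall>u v. E u v \<longrightarrow> u \<in> V \<and> v \<in> V)
     \<and> (\<forall>u v. E u v \<longrightarrow> E v u) \<and> (\<forall>v. \<not> E v v)"

definition compl_edge :: "'a set \<Rightarrow> ('a \<Rightarrow> 'a \<Rightarrow> bool) \<Rightarrow> 'a \<Rightarrow> 'a \<Rightarrow> bool" where
  "compl_edge V E u v \<longleftrightarrow> u \<in> V \<and> v \<in> V \<and> u \<noteq> v \<and> \<not> E u v"

definition connected_graph :: "'a set \<Rightarrow> ('a \<Rightarrow> 'a \<Rightarrow> bool) \<Rightarrow> bool" where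
  "connected_graph V E \<longleftrightarrow> V \<noteq> {} \<and> (\<forall>u\<in>V. \<forall>v\<in>V. E\<^sup>*\<^sup>* u v)"

definition triangle_free :: "('a \<Rightarrow> 'a \<Rightarrow> bool) \<Rightarrow> bool" where
  "triangle_free E \<longleftrightarrow> \<not> (\<exists>x y z. E x y \<and> E y z \<and> E x z)"

definition colorable :: "'a set \<Rightarrow> ('a \<Rightarrow> 'a \<Rightarrow> bool) \<Rightarrow> nat \<Rightarrow> bool" where
  "colorable V E k \<longleftrightarrow> (\<exists>c :: 'a \<Rightarrow> nat. (\<forall>v\<in>V. c v < k) \<and> (\<forall>u v. E u v \<longrightarrow> c u \<noteq> c v))"

definition add_edge :: "('a \<Rightarrow> 'a \<Rightarrow> bool) \<Rightarrow> 'a \<Rightarrow> 'a \<Rightarrow> 'a \<Rightarrow> 'a \<Rightarrow> bool" where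
  "add_edge E u v = (\<lambda>x y. E x y \<or> (x = u \<and> y = v) \<or> (x = v \<and> y = u))"

definition minimal_prime_graph_complement :: "'a set \<Rightarrow> ('a \<Rightarrow> 'a \<Rightarrow> bool) \<Rightarrow> bool" where
  "minimal_prime_graph_complement V E \<longleftrightarrow>
     simple_graph V E \<and> card V \<ge> 2
     \<and> connected_graph V (compl_edge V E)
     \<and> triangle_free E
     \<and> colorable V E 3
     \<and> (\<forall>u\<in>V. \<forall>v\<in>V. u \<noteq> v \<and> \<not> E u v \<longrightarrow>
          \<not> triangle_free (add_edge E u v) \<or> \<not> colorable V (add_edge E u v) 3)"

definition S_Z :: "'a set \<Rightarrow> ('a \<Rightarrow> 'a \<Rightarrow> bool) \<Rightarrow> 'a \<Rightarrow> 'a \<Rightarrow> 'a \<Rightarrow> 'a set" where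
  "S_Z V E X A B = {v \<in> V - {X, A, B}. \<not> E v A \<and> \<not> E v B}"

end

theory Submission
  imports Defs
begin

lemma aux:
  assumes mp: "minimal_prime_graph_complement V E"
    and XV: "X \<in> V"
    and N: "{y \<in> V. E X y} = {A, B}"
    and aZ: "a \<in> S_Z V E X A B"
    and c: "\<forall>v\<in>V. c v < (3::nat)" "\<forall>u v. E u v \<longrightarrow> c u \<noteq> c v"
  shows "c X = c a"
proof (rule ccontr)
  assume ne: "c X \<noteq> c a"
  have sg: "simple_graph V E" and tf: "triangle_free E"
    and min: "\<forall>u\<in>V. \<forall>v\<in>V. u \<noteq> v \<and> \<not> E u v \<longrightarrow>
          \<not> triangle_free (add_edge E u v) \<or> \<not> colorable V (add_edge E u v) 3"
    using mp unfolding minimal_prime_graph_complement_def by auto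
  have sym: "\<And>u v. E u v \<Longrightarrow> E v u" and irr: "\<And>v. \<not> E v v"
    and inV: "\<And>u v. E u v \<Longrightarrow> u \<in> V \<and> v \<in> V"
    using sg unfolding simple_graph_def by blast+
  have aV: "a \<in> V" and aX: "a \<noteq> X" and aA: "a \<noteq> A" "a \<noteq> B"
    and nA: "\<not> E a A" and nB: "\<not> E a B"
    using aZ unfolding S_Z_def by auto
  have nA': "\<not> E A a" and nB': "\<not> E B a" using nA nB sym by blast+
  have Xn: "\<And>y. E X y \<Longrightarrow> y = A \<or> y = B" using N inV by blast
  have Xn': "\<And>y. E y X \<Longrightarrow> y = A \<or> y = B" using Xn sym by blast
  have nXa: "\<not> E X a" using Xn aA by blast
  have "triangle_free (add_edge E X a)"
    unfolding triangle_free_def add_edge_def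
  proof (clarify)
    fix x y z
    assume h: "E x y \<or> x = X \<and> y = a \<or> x = a \<and> y = X"
      "E y z \<or> y = X \<and> z = a \<or> y = a \<and> z = X"
      "E x z \<or> x = X \<and> z = a \<or> x = a \<and> z = X"
    show False
      using h tf[unfolded triangle_free_def] irr Xn Xn' nA nB nA' nB' aX
      by (elim disjE conjE) (auto dest: Xn Xn')
  qed
  moreover have "colorable V (add_edge E X a) 3"
    unfolding colorable_def add_edge_def using c ne by metis
  ultimately show False using min XV aV aX nXa by (metis (no_types))
qed

theorem lemma7:
  fixes V :: "'a set" and E :: "'a \<Rightarrow> 'a \<Rightarrow> bool" and X A B a b :: 'a
  assumes "minimal_prime_graph_complement V E"
    and "X \<in> V"
    and "A \<noteq> B"
    and "{y \<in> V. E X y} = {A, B}"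
    and "a \<in> S_Z V E X A B" and "b \<in> S_Z V E X A B"
  shows "\<not> E a b"
proof
  assume ab: "E a b"
  obtain c :: "'a \<Rightarrow> nat" where c: "\<forall>v\<in>V. c v < 3" "\<forall>u v. E u v \<longrightarrow> c u \<noteq> c v"
    using assms(1) unfolding minimal_prime_graph_complement_def colorable_def by blast
  have "c X = c a" using aux[OF assms(1,2,4,5) c] .
  moreover have "c X = c b" using aux[OF assms(1,2,4,6) c] .
  ultimately show False using c(2) ab by metis
qed

end
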